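(* Let $\Omega\subset\mathbb{R}^N$ ($N\ge2$) be a bounded smooth domain, $1<q<2<p$, $a,b\in C^\alpha(\overline\Omega)$, and assume there exists a ball $B$ with $\overline B\subset\Omega$ such that $a\ge0$, $a\not\equiv0$ and $b>0$ on $\overline B$. Then there exist constants $\overline\lambda>0$ and $\epsilon_0>0$ such that for every $\lambda\ge\overline\lambda$ and $\epsilon\in(0,\epsilon_0]$ the problem $-\Delta u=\lambda(b(x)-\epsilon)|u+\epsilon|^{q-2}u+a(x)|u|^{p-2}u$ in $\Omega$, $\frac{\partial u}{\partial\mathbf{n}}=0$ on $\partial\Omega$, has no nontrivial non-negative solution.
   Context: Nontrivial non-negative: $u\ge0$ on $\overline\Omega$, $u\not\equiv0$; solutions are classical. *)

theory Defs
  imports "HOL-Analysis.Analysis"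
begin

definition partial_deriv :: "'a::euclidean_space \<Rightarrow> ('a \<Rightarrow> real) \<Rightarrow> 'a \<Rightarrow> real" where
  "partial_deriv i f x = deriv (\<lambda>t. f (x + t *\<^sub>R i)) 0"

text \<open>C-infinity on the whole space: all iterated partial derivatives (along basis
  directions) exist everywhere and are continuous.\<close>
definition smooth_fun :: "('a::euclidean_space \<Rightarrow> real) \<Rightarrow> bool" where
  "smooth_fun f \<longleftrightarrow>
     (\<forall>is. set is \<subseteq> Basis \<longrightarrow>
        continuous_on UNIV (foldr partial_deriv is f) \<and>
        (\<forall>i\<in>Basis. \<forall>x. (\<lambda>t. foldr partial_deriv is f (x + t *\<^sub>R i)) field_differentiable (at 0)))"

definition grad :: "('a::euclidean_space \<Rightarrow> real) \<Rightarrow> 'a \<Rightarrow> 'a" where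
  "grad f x = (\<Sum>i\<in>Basis. partial_deriv i f x *\<^sub>R i)"

text \<open>A smooth defining function of a domain: Omega = {phi < 0}, grad phi nonzero on {phi = 0}.
  The outward normal at a boundary point is grad phi / |grad phi|.\<close>
definition defining_function :: "'a::euclidean_space set \<Rightarrow> ('a \<Rightarrow> real) \<Rightarrow> bool" where
  "defining_function \<Omega> \<phi> \<longleftrightarrow> smooth_fun \<phi> \<and> \<Omega> = {x. \<phi> x < 0} \<and>
     (\<forall>x. \<phi> x = 0 \<longrightarrow> grad \<phi> x \<noteq> 0)"

definition bounded_smooth_domain :: "'a::euclidean_space set \<Rightarrow> bool" where
  "bounded_smooth_domain \<Omega> \<longleftrightarrow> open \<Omega> \<and> connected \<Omega> \<and> \<Omega> \<noteq> {} \<and> bounded \<Omega> \<and>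
     (\<exists>\<phi>. defining_function \<Omega> \<phi>)"

definition holder_continuous_on :: "real \<Rightarrow> 'a::metric_space set \<Rightarrow> ('a \<Rightarrow> real) \<Rightarrow> bool" where
  "holder_continuous_on \<alpha> S f \<longleftrightarrow> (\<exists>C. \<forall>x\<in>S. \<forall>y\<in>S. \<bar>f x - f y\<bar> \<le> C * dist x y powr \<alpha>)"

text \<open>Classical solution u in C^2(Omega) \<inter> C^1(closure Omega) of
  -Laplace u = F x (u x) in Omega, du/dn = 0 on the boundary.\<close>
definition neumann_classical_solution ::
  "'a::euclidean_space set \<Rightarrow> ('a \<Rightarrow> real \<Rightarrow> real) \<Rightarrow> ('a \<Rightarrow> real) \<Rightarrow> bool" where
  "neumann_classical_solution \<Omega> F u \<longleftrightarrow>
     (\<exists>Du :: 'a \<Rightarrow> 'a. \<exists>D2u :: 'a \<Rightarrow> 'a \<Rightarrow> 'a.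
        continuous_on (closure \<Omega>) u \<and>
        continuous_on (closure \<Omega>) Du \<and>
        (\<forall>x\<in>\<Omega>. (u has_derivative (\<lambda>h. Du x \<bullet> h)) (at x)) \<and>
        (\<forall>x\<in>\<Omega>. (Du has_derivative D2u x) (at x)) \<and>
        (\<forall>i\<in>Basis. \<forall>j\<in>Basis. continuous_on \<Omega> (\<lambda>x. D2u x i \<bullet> j)) \<and>
        (\<forall>x\<in>\<Omega>. - (\<Sum>i\<in>Basis. D2u x i \<bullet> i) = F x (u x)) \<and>
        (\<forall>\<phi>. defining_function \<Omega> \<phi> \<longrightarrow> (\<forall>x\<in>frontier \<Omega>. Du x \<bullet> grad \<phi> x = 0)))"

end

theory Submission
  imports Defs
begin

lemma oned_second_deriv:
  fixes g k :: "real \<Rightarrow> real"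
  assumes e: "0 < e"
    and dg: "\<And>t. \<bar>t\<bar> < e \<Longrightarrow> (g has_real_derivative k t) (at t)"
    and mn: "\<And>t. \<bar>t\<bar> < e \<Longrightarrow> g 0 \<le> g t"
    and dk: "(k has_real_derivative c) (at 0)"
  shows "0 \<le> c"
proof (rule ccontr)
  assume "\<not> 0 \<le> c"
  hence c: "c < 0" by simp
  have k0: "k 0 = 0"
    using DERIV_local_min[OF dg[of 0] e] mn e by auto
  obtain d where d: "d > 0" "\<And>h. h > 0 \<Longrightarrow> h < d \<Longrightarrow> k (0 + h) < k 0"
    using DERIV_neg_dec_right[OF dk c] by blast
  define t where "t = min d e / 2"
  have t: "0 < t" "t < d" "t < e" using d e by (auto simp: t_def)
  obtain z where z: "0 < z" "z < t" "g t - g 0 = (t - 0) * k z"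
    using MVT2[of 0 t g k] t dg by force
  have "k z < 0" using d(2)[of z] z t k0 by simp
  hence "g t - g 0 < 0" using z t by (simp add: mult_pos_neg)
  moreover have "g 0 \<le> g t" using mn t by simp
  ultimately show False by simp
qed

lemma second_deriv_test:
  fixes w :: "'a::euclidean_space \<Rightarrow> real"
  assumes S: "open S" "x \<in> S"
    and mn: "\<And>y. y \<in> S \<Longrightarrow> w x \<le> w y"
    and dw: "\<And>y. y \<in> S \<Longrightarrow> (w has_derivative (\<lambda>h. Dw y \<bullet> h)) (at y)"
    and d2: "(Dw has_derivative D2) (at x)"
  shows "0 \<le> (\<Sum>i\<in>Basis. D2 i \<bullet> i)"
proof (rule sum_nonneg)
  fix i :: 'a assume i: "i \<in> Basis"
  obtain e where e: "e > 0" "ball x e \<subseteq> S" using S open_contains_ball by blast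
  have inb: "x + t *\<^sub>R i \<in> S" if "\<bar>t\<bar> < e" for t
    using e(2) that i by (auto simp: dist_norm)
  have lin: "((\<lambda>t. x + t *\<^sub>R i) has_derivative (\<lambda>s. s *\<^sub>R i)) (at t)" for t
    by (auto intro!: derivative_eq_intros)
  show "0 \<le> D2 i \<bullet> i"
  proof (rule oned_second_deriv[OF e(1), where g="\<lambda>t. w (x + t *\<^sub>R i)" and k="\<lambda>t. Dw (x + t *\<^sub>R i) \<bullet> i"])
    fix t :: real assume t: "\<bar>t\<bar> < e"
    have "((\<lambda>t. w (x + t *\<^sub>R i)) has_derivative (\<lambda>s. Dw (x + t *\<^sub>R i) \<bullet> (s *\<^sub>R i))) (at t)"
      using has_derivative_compose[OF lin dw[OF inb[OF t]]] .
    thus "((\<lambda>t. w (x + t *\<^sub>R i)) has_real_derivative Dw (x + t *\<^sub>R i) \<bullet> i) (at t)"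
      unfolding has_field_derivative_def by (rule has_derivative_eq_rhs) (auto simp: fun_eq_iff)
    show "w (x + 0 *\<^sub>R i) \<le> w (x + t *\<^sub>R i)" using mn[OF inb[OF t]] by simp
  next
    have d2': "(Dw has_derivative D2) (at (x + 0 *\<^sub>R i))" using d2 by simp
    have "((\<lambda>t. Dw (x + t *\<^sub>R i)) has_derivative (\<lambda>s. D2 (s *\<^sub>R i))) (at 0)"
      using has_derivative_compose[OF lin d2'] .
    hence "((\<lambda>t. Dw (x + t *\<^sub>R i) \<bullet> i) has_derivative (\<lambda>s. D2 (s *\<^sub>R i) \<bullet> i)) (at 0)"
      by (rule has_derivative_inner_left)
    moreover have "(\<lambda>s. D2 (s *\<^sub>R i) \<bullet> i) = (\<lambda>s. s * (D2 i \<bullet> i))"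
      using linear_cmul[OF has_derivative_linear[OF d2]] by (simp add: mult.commute)
    ultimately show "((\<lambda>t. Dw (x + t *\<^sub>R i) \<bullet> i) has_real_derivative D2 i \<bullet> i) (at 0)"
      unfolding has_field_derivative_def by (auto elim!: has_derivative_eq_rhs simp: fun_eq_iff)
  qed
qed



definition gE :: "real \<Rightarrow> 'a::euclidean_space \<Rightarrow> 'a \<Rightarrow> real" where
  "gE \<alpha> z x = exp (- \<alpha> * ((x - z) \<bullet> (x - z)))"
definition gDE :: "real \<Rightarrow> 'a::euclidean_space \<Rightarrow> 'a \<Rightarrow> 'a" where
  "gDE \<alpha> z x = (- 2 * \<alpha> * gE \<alpha> z x) *\<^sub>R (x - z)"
definition gD2E :: "real \<Rightarrow> 'a::euclidean_space \<Rightarrow> 'a \<Rightarrow> 'a \<Rightarrow> 'a" where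
  "gD2E \<alpha> z x h = (- 2 * \<alpha> * gE \<alpha> z x) *\<^sub>R h + (4 * \<alpha>^2 * gE \<alpha> z x * ((x - z) \<bullet> h)) *\<^sub>R (x - z)"

lemma gE_pos: "gE \<alpha> z x > 0" by (simp add: gE_def)

lemma gE_deriv: "(gE \<alpha> z has_derivative (\<lambda>h. gDE \<alpha> z x \<bullet> h)) (at x)"
  unfolding gE_def[abs_def] gDE_def
  by (auto intro!: derivative_eq_intros simp: fun_eq_iff gE_def inner_commute algebra_simps)

lemma gDE_deriv: "(gDE \<alpha> z has_derivative gD2E \<alpha> z x) (at x)"
proof -
  have "((\<lambda>x. (- 2 * \<alpha> * gE \<alpha> z x) *\<^sub>R (x - z)) has_derivative
     (\<lambda>h. (- 2 * \<alpha> * gE \<alpha> z x) *\<^sub>R (h - 0) + (- 2 * \<alpha> * (gDE \<alpha> z x \<bullet> h)) *\<^sub>R (x - z))) (at x)"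
  proof (rule has_derivative_scaleR)
    show "((\<lambda>x. - 2 * \<alpha> * gE \<alpha> z x) has_derivative (\<lambda>h. - 2 * \<alpha> * (gDE \<alpha> z x \<bullet> h))) (at x)"
      by (rule has_derivative_mult_right[OF gE_deriv])
    show "((\<lambda>x. x - z) has_derivative (\<lambda>h. h - 0)) (at x)"
      by (intro has_derivative_diff has_derivative_ident has_derivative_const)
  qed
  thus ?thesis unfolding gDE_def[abs_def] gD2E_def[abs_def]
    by (rule has_derivative_eq_rhs) (auto simp: fun_eq_iff gDE_def power2_eq_square algebra_simps)
qed

lemma gD2E_trace: "(\<Sum>i\<in>Basis. gD2E \<alpha> z (x::'a::euclidean_space) i \<bullet> i) =
   gE \<alpha> z x * (4 * \<alpha>^2 * ((x - z) \<bullet> (x - z)) - 2 * \<alpha> * DIM('a))"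
proof -
  have "(\<Sum>i\<in>Basis. gD2E \<alpha> z x i \<bullet> i) =
     (\<Sum>i\<in>Basis. (- 2 * \<alpha> * gE \<alpha> z x) + (4 * \<alpha>^2 * gE \<alpha> z x) * (((x - z) \<bullet> i) * ((x - z) \<bullet> i)))"
    by (rule sum.cong) (auto simp: gD2E_def inner_add_left algebra_simps)
  also have "\<dots> = DIM('a) * (- 2 * \<alpha> * gE \<alpha> z x) + (4 * \<alpha>^2 * gE \<alpha> z x) * ((x - z) \<bullet> (x - z))"
    by (simp add: sum.distrib sum_subtractf sum_distrib_left[symmetric] euclidean_inner[of "x - z" "x - z"])
  finally show ?thesis by (simp add: algebra_simps)
qed


lemma gE_dist: "gE \<alpha> z x = exp (- \<alpha> * (dist z x)^2)"
  by (simp add: gE_def dist_norm power2_norm_eq_inner[symmetric] norm_minus_commute)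

lemma gE_le1: "\<alpha> \<ge> 0 \<Longrightarrow> gE \<alpha> z x \<le> 1"
  by (simp add: gE_dist)

lemma gE_cont: "continuous_on S (gE \<alpha> z)"
  unfolding gE_def[abs_def] by (intro continuous_intros)

lemma hopf_local:
  fixes u :: "'a::euclidean_space \<Rightarrow> real"
  assumes U: "open U" and cont: "continuous_on U u" and nn: "\<forall>x\<in>U. 0 \<le> u x"
   and C: "0 \<le> C"
   and du: "\<forall>x\<in>U. (u has_derivative (\<lambda>h. Du x \<bullet> h)) (at x)"
   and d2u: "\<forall>x\<in>U. (Du has_derivative D2u x) (at x)"
   and pde: "\<forall>x\<in>U. - (\<Sum>i\<in>Basis. D2u x i \<bullet> i) \<ge> - C * u x"
   and d: "0 < d" "cball x1 d \<subseteq> U" "\<forall>y\<in>ball x1 d. 0 < u y"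
   and y1: "dist x1 y1 = d" "u y1 = 0"
  shows False
proof -
  define N where "N = real DIM('a)"
  have N: "N \<ge> 1" unfolding N_def using DIM_positive[where 'a='a] by linarith
  define \<alpha> where "\<alpha> = (2 * N + C + 1) / d^2 + 1"
  have a1: "\<alpha> \<ge> 1" using C N d by (simp add: \<alpha>_def)
  have ad: "\<alpha> * d^2 = 2 * N + C + 1 + d^2" using d by (simp add: \<alpha>_def field_simps)
  have key: "\<alpha>^2 * d^2 > 2 * \<alpha> * N + C"
  proof -
    have "\<alpha>^2 * d^2 = \<alpha> * (\<alpha> * d^2)" by (simp add: power2_eq_square)
    also have "\<dots> \<ge> \<alpha> * (2 * N + C + 1)" using ad a1 d by (intro mult_left_mono) auto
    finally have "\<alpha>^2 * d^2 \<ge> 2 * \<alpha> * N + \<alpha> * C + \<alpha>" by (simp add: algebra_simps)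
    moreover have "\<alpha> * C \<ge> C" using a1 C by (simp add: mult_le_cancel_right1 mult_right_mono)
    ultimately show ?thesis using a1 by linarith
  qed
  define c0 where "c0 = exp (- \<alpha> * d^2)"
  have c0: "c0 > 0" by (simp add: c0_def)
  define hh where "hh x = gE \<alpha> x1 x - c0" for x
  define S1 where "S1 = sphere x1 (d/2)"
  have S1sub: "S1 \<subseteq> ball x1 d" using d by (auto simp: S1_def)
  have S1U: "S1 \<subseteq> U" using S1sub d(2) ball_subset_cball by blast
  obtain xm where xm: "xm \<in> S1" "\<And>y. y \<in> S1 \<Longrightarrow> u xm \<le> u y"
    using continuous_attains_inf[of S1 u] continuous_on_subset[OF cont S1U] d
    by (auto simp: S1_def)
  define m where "m = u xm"
  have m: "m > 0" using xm(1) S1sub d(3) by (auto simp: m_def)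
  define K where "K = cball x1 d - ball x1 (d/2)"
  have KU: "K \<subseteq> U" using d(2) by (auto simp: K_def)
  have Kc: "compact K" unfolding K_def by (intro compact_diff) auto
  have y1K: "y1 \<in> K" using y1 d by (auto simp: K_def)
  define w where "w x = u x - m * hh x" for x
  have wcont: "continuous_on K w"
    unfolding w_def[abs_def] hh_def
    by (intro continuous_intros continuous_on_subset[OF cont KU] continuous_on_subset[OF gE_cont]) auto
  have wpos: "\<forall>x\<in>K. 0 \<le> w x"
  proof (rule ccontr)
    assume "\<not> (\<forall>x\<in>K. 0 \<le> w x)"
    then obtain x0 where x0: "x0 \<in> K" "w x0 < 0" by auto
    obtain x2 where x2: "x2 \<in> K" "\<And>y. y \<in> K \<Longrightarrow> w x2 \<le> w y"
      using continuous_attains_inf[OF Kc _ wcont] y1K by blast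
    have w2: "w x2 < 0" using x2(2)[OF x0(1)] x0(2) by simp
    have x2U: "x2 \<in> U" using x2(1) KU by auto
    have ne1: "dist x1 x2 \<noteq> d"
    proof
      assume "dist x1 x2 = d"
      hence "hh x2 = 0" by (simp add: hh_def gE_dist c0_def)
      thus False using w2 nn x2U by (auto simp: w_def)
    qed
    have ne2: "dist x1 x2 \<noteq> d/2"
    proof
      assume "dist x1 x2 = d/2"
      hence "x2 \<in> S1" by (simp add: S1_def)
      hence "u x2 \<ge> m" using xm(2) by (simp add: m_def)
      moreover have "hh x2 \<le> 1" using gE_le1[of \<alpha> x1 x2] a1 c0 by (simp add: hh_def)
      hence "m * hh x2 \<le> m" using m by (simp add: mult_left_le)
      ultimately show False using w2 by (simp add: w_def)
    qed
    define A where "A = ball x1 d \<inter> - cball x1 (d/2)"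
    have Aopen: "open A" unfolding A_def by (intro open_Int open_Compl) auto
    have x2A: "x2 \<in> A" using x2(1) ne1 ne2 by (auto simp: A_def K_def)
    have AK: "A \<subseteq> K" by (auto simp: A_def K_def)
    have AU: "A \<subseteq> U" using AK KU by auto
    have dw: "(w has_derivative (\<lambda>h. (Du y - m *\<^sub>R gDE \<alpha> x1 y) \<bullet> h)) (at y)" if "y \<in> A" for y
    proof -
      have "(w has_derivative (\<lambda>h. Du y \<bullet> h - m * (gDE \<alpha> x1 y \<bullet> h - 0))) (at y)"
        unfolding w_def[abs_def] hh_def
        by (intro has_derivative_diff has_derivative_mult_right gE_deriv has_derivative_const)
           (use du AU that in auto)
      thus ?thesis by (rule has_derivative_eq_rhs) (auto simp: fun_eq_iff inner_diff_left)
    qed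
    have d2w: "((\<lambda>y. Du y - m *\<^sub>R gDE \<alpha> x1 y) has_derivative (\<lambda>h. D2u x2 h - m *\<^sub>R gD2E \<alpha> x1 x2 h)) (at x2)"
      by (intro has_derivative_diff has_derivative_scaleR_right gDE_deriv) (use d2u x2U in auto)
    have "0 \<le> (\<Sum>i\<in>Basis. (D2u x2 i - m *\<^sub>R gD2E \<alpha> x1 x2 i) \<bullet> i)"
      by (rule second_deriv_test[OF Aopen x2A _ dw d2w]) (use x2(2) AK in auto)
    also have "\<dots> = (\<Sum>i\<in>Basis. D2u x2 i \<bullet> i) - m * (\<Sum>i\<in>Basis. gD2E \<alpha> x1 x2 i \<bullet> i)"
      by (simp add: inner_diff_left sum_subtractf sum_distrib_left)
    finally have s1: "m * (\<Sum>i\<in>Basis. gD2E \<alpha> x1 x2 i \<bullet> i) \<le> (\<Sum>i\<in>Basis. D2u x2 i \<bullet> i)" by simp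
    define G where "G = gE \<alpha> x1 x2"
    have G: "G > 0" by (simp add: G_def gE_pos)
    define r2 where "r2 = (x2 - x1) \<bullet> (x2 - x1)"
    have r2: "r2 = (dist x1 x2)^2"
      by (simp add: r2_def dist_norm power2_norm_eq_inner[symmetric] norm_minus_commute)
    have "dist x1 x2 \<ge> d/2" using x2(1) by (auto simp: K_def)
    hence "(dist x1 x2)^2 \<ge> (d/2)^2" using d by (intro power_mono) auto
    hence r2d: "4 * r2 \<ge> d^2" using r2 by (simp add: power2_eq_square)
    have tr: "(\<Sum>i\<in>Basis. gD2E \<alpha> x1 x2 i \<bullet> i) = G * (4 * \<alpha>^2 * r2 - 2 * \<alpha> * N)"
      by (simp add: gD2E_trace G_def r2_def N_def)
    have s2: "(\<Sum>i\<in>Basis. D2u x2 i \<bullet> i) \<le> C * u x2" using pde x2U by auto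
    have "u x2 < m * hh x2" using w2 by (simp add: w_def)
    also have "\<dots> \<le> m * G" using m c0 by (simp add: hh_def G_def)
    finally have "C * u x2 \<le> C * (m * G)" using C by (intro mult_left_mono) auto
    hence "m * (G * (4 * \<alpha>^2 * r2 - 2 * \<alpha> * N)) \<le> (m * G) * C"
      using s1 s2 tr by (simp add: algebra_simps)
    hence "(m * G) * (4 * \<alpha>^2 * r2 - 2 * \<alpha> * N) \<le> (m * G) * C" by (simp add: algebra_simps)
    hence "4 * \<alpha>^2 * r2 - 2 * \<alpha> * N \<le> C" using m G by (simp add: mult_le_cancel_left_pos)
    moreover have "4 * \<alpha>^2 * r2 \<ge> \<alpha>^2 * d^2" using mult_left_mono[OF r2d, of "\<alpha>^2"] by (simp add: algebra_simps)
    ultimately show False using key by linarith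
  qed
  have y1U: "y1 \<in> U" using y1 d by auto
  define v where "v = x1 - y1"
  have vn: "norm v = d" using y1 by (simp add: v_def dist_norm)
  have lin: "((\<lambda>t. y1 + t *\<^sub>R v) has_derivative (\<lambda>s. s *\<^sub>R v)) (at t)" for t
    by (auto intro!: derivative_eq_intros)
  have dpsi: "((\<lambda>t. u (y1 + t *\<^sub>R v)) has_real_derivative Du y1 \<bullet> v) (at 0)"
  proof -
    have "((\<lambda>t. u (y1 + t *\<^sub>R v)) has_derivative (\<lambda>s. Du (y1 + 0 *\<^sub>R v) \<bullet> (s *\<^sub>R v))) (at 0)"
    proof -
      have "(u has_derivative (\<lambda>h. Du (y1 + 0 *\<^sub>R v) \<bullet> h)) (at (y1 + 0 *\<^sub>R v))" using du y1U by simp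
      from has_derivative_compose[OF lin this] show ?thesis .
    qed
    thus ?thesis unfolding has_field_derivative_def by (rule has_derivative_eq_rhs) (auto simp: fun_eq_iff)
  qed
  obtain e where e: "e > 0" "ball y1 e \<subseteq> U" using U y1U open_contains_ball by blast
  have "Du y1 \<bullet> v = 0"
  proof (rule DERIV_local_min[OF dpsi])
    show "0 < e / d" using e d by simp
    show "\<forall>y. \<bar>0 - y\<bar> < e / d \<longrightarrow> u (y1 + 0 *\<^sub>R v) \<le> u (y1 + y *\<^sub>R v)"
    proof (intro allI impI)
      fix t :: real assume "\<bar>0 - t\<bar> < e / d"
      hence "\<bar>t\<bar> * d < e" using d by (simp add: field_simps)
      hence "y1 + t *\<^sub>R v \<in> ball y1 e" using vn by (simp add: dist_norm)
      thus "u (y1 + 0 *\<^sub>R v) \<le> u (y1 + t *\<^sub>R v)" using e nn y1 by auto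
    qed
  qed
  hence Dv0: "Du y1 \<bullet> v = 0" .
  have gDEv: "gDE \<alpha> x1 y1 \<bullet> v = 2 * \<alpha> * gE \<alpha> x1 y1 * d^2"
  proof -
    have "gDE \<alpha> x1 y1 \<bullet> v = 2 * \<alpha> * gE \<alpha> x1 y1 * (v \<bullet> v)"
      by (simp add: gDE_def v_def inner_diff_left inner_diff_right inner_commute algebra_simps)
    thus ?thesis using vn by (simp add: power2_norm_eq_inner[symmetric])
  qed
  define L where "L = Du y1 \<bullet> v - m * (gDE \<alpha> x1 y1 \<bullet> v)"
  have Lneg: "L < 0" using Dv0 gDEv m d a1 by (simp add: L_def gE_pos)
  have dphi: "((\<lambda>t. w (y1 + t *\<^sub>R v)) has_real_derivative L) (at 0)"
  proof -
    have dh: "((\<lambda>t. hh (y1 + t *\<^sub>R v)) has_real_derivative gDE \<alpha> x1 y1 \<bullet> v) (at 0)"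
    proof -
      have "((\<lambda>t. gE \<alpha> x1 (y1 + t *\<^sub>R v)) has_derivative (\<lambda>s. gDE \<alpha> x1 (y1 + 0 *\<^sub>R v) \<bullet> (s *\<^sub>R v))) (at 0)"
        using has_derivative_compose[OF lin[of 0] gE_deriv[of \<alpha> x1 "y1 + 0 *\<^sub>R v"]] by simp
      hence "((\<lambda>t. gE \<alpha> x1 (y1 + t *\<^sub>R v)) has_real_derivative gDE \<alpha> x1 y1 \<bullet> v) (at 0)"
        unfolding has_field_derivative_def by (rule has_derivative_eq_rhs) (auto simp: fun_eq_iff)
      thus ?thesis unfolding hh_def by (auto intro!: derivative_eq_intros)
    qed
    show ?thesis unfolding w_def L_def
      by (rule DERIV_diff[OF dpsi DERIV_cmult[OF dh]])
  qed
  obtain \<delta> where \<delta>: "\<delta> > 0" "\<And>h. h > 0 \<Longrightarrow> h < \<delta> \<Longrightarrow> w (y1 + (0 + h) *\<^sub>R v) < w (y1 + 0 *\<^sub>R v)"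
    using DERIV_neg_dec_right[OF dphi Lneg] by blast
  define t where "t = min \<delta> (1/2) / 2"
  have t: "0 < t" "t < \<delta>" "t \<le> 1/2" using \<delta> by (auto simp: t_def)
  have wy1: "w y1 = 0" using y1 by (simp add: w_def hh_def gE_dist c0_def dist_commute)
  have "w (y1 + t *\<^sub>R v) < 0" using \<delta>(2)[OF t(1) t(2)] wy1 by simp
  moreover have "y1 + t *\<^sub>R v \<in> K"
  proof -
    have "x1 - (y1 + t *\<^sub>R v) = (1 - t) *\<^sub>R v" by (simp add: v_def algebra_simps)
    hence "dist x1 (y1 + t *\<^sub>R v) = (1 - t) * d" using vn t by (simp add: dist_norm)
    moreover have "(1 - t) * d \<le> d" using mult_pos_pos[of t d] t d by (simp add: algebra_simps)
    moreover have "d/2 \<le> (1-t)*d" using mult_right_mono[of "1/2" "1-t" d] t d by simp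
    ultimately show ?thesis by (auto simp: K_def)
  qed
  ultimately show False using wpos by auto
qed


lemma strong_pos:
  fixes u :: "'a::euclidean_space \<Rightarrow> real"
  assumes U: "open U" "connected U" and cont: "continuous_on U u" and nn: "\<forall>x\<in>U. 0 \<le> u x"
   and C: "0 \<le> C"
   and du: "\<forall>x\<in>U. (u has_derivative (\<lambda>h. Du x \<bullet> h)) (at x)"
   and d2u: "\<forall>x\<in>U. (Du has_derivative D2u x) (at x)"
   and pde: "\<forall>x\<in>U. - (\<Sum>i\<in>Basis. D2u x i \<bullet> i) \<ge> - C * u x"
   and ex: "\<exists>x\<in>U. u x > 0"
  shows "\<forall>x\<in>U. u x > 0"
proof (rule ccontr)
  assume "\<not> (\<forall>x\<in>U. u x > 0)"
  then obtain y0 where y0: "y0 \<in> U" "u y0 = 0" using nn by force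
  define Z where "Z = {x \<in> U. u x = 0}"
  have Zc: "closedin (top_of_set U) Z" unfolding Z_def by (rule continuous_closedin_preimage_constant[OF cont])
  have Zne: "Z \<noteq> {}" using y0 by (auto simp: Z_def)
  have ZU: "Z \<noteq> U" using ex unfolding Z_def by force
  have "\<not> openin (top_of_set U) Z"
    using U(2) Zc Zne ZU unfolding connected_clopen by blast
  then obtain y where y: "y \<in> Z" "\<And>e. e > 0 \<Longrightarrow> \<exists>x'\<in>U. dist x' y < e \<and> x' \<notin> Z"
    unfolding openin_euclidean_subtopology_iff by (auto simp: Z_def)
  have yU: "y \<in> U" using y(1) by (simp add: Z_def)
  obtain r0 where r0: "r0 > 0" "cball y r0 \<subseteq> U" using U(1) yU open_contains_cball by blast
  define r where "r = r0 / 2"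
  have r: "r > 0" "cball y (2 * r) \<subseteq> U" using r0 by (auto simp: r_def)
  obtain x1 where x1: "x1 \<in> U" "dist x1 y < r" "x1 \<notin> Z" using y(2)[OF r(1)] by blast
  have ux1: "u x1 > 0" using x1 nn by (force simp: Z_def)
  define Z' where "Z' = {x \<in> cball y (2 * r). u x = 0}"
  have Z'c: "closed Z'" unfolding Z'_def
    by (rule continuous_closed_preimage_constant) (auto intro: continuous_on_subset[OF cont r(2)])
  have yZ': "y \<in> Z'" using y(1) r by (auto simp: Z_def Z'_def)
  obtain y1 where y1: "y1 \<in> Z'" "\<And>z. z \<in> Z' \<Longrightarrow> dist x1 y1 \<le> dist x1 z"
    using distance_attains_inf[OF Z'c, of x1] yZ' by blast
  define d where "d = dist x1 y1"
  have dlt: "d < r" using y1(2)[OF yZ'] x1(2) by (simp add: d_def dist_commute)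
  have dpos: "d > 0" using y1(1) ux1 by (auto simp: d_def Z'_def)
  have cb: "cball x1 d \<subseteq> cball y (2 * r)"
  proof
    fix z assume "z \<in> cball x1 d"
    hence "dist x1 z \<le> d" by simp
    moreover have "dist y z \<le> dist y x1 + dist x1 z" by (rule dist_triangle)
    ultimately show "z \<in> cball y (2 * r)" using x1(2) dlt by (simp add: dist_commute)
  qed
  have pos: "\<forall>z\<in>ball x1 d. 0 < u z"
  proof
    fix z assume z: "z \<in> ball x1 d"
    hence zc: "z \<in> cball y (2 * r)" using cb ball_subset_cball[of x1 d] by blast
    hence "0 \<le> u z" using r(2) nn by auto
    moreover have "u z \<noteq> 0"
    proof
      assume "u z = 0"
      hence "z \<in> Z'" using zc by (simp add: Z'_def)
      from y1(2)[OF this] z show False by (simp add: d_def)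
    qed
    ultimately show "0 < u z" by simp
  qed
  show False
    by (rule hopf_local[OF U(1) cont nn C du d2u pde dpos _ pos])
       (use cb r(2) y1(1) in \<open>auto simp: d_def Z'_def\<close>)
qed


lemma touching:
  fixes u :: "'a::euclidean_space \<Rightarrow> real"
  assumes U: "open U" and rho: "0 < \<rho>" "cball c \<rho> \<subseteq> U"
   and cont: "continuous_on U u" and pos: "\<forall>x\<in>cball c \<rho>. 0 < u x"
   and du: "\<forall>x\<in>U. (u has_derivative (\<lambda>h. Du x \<bullet> h)) (at x)"
   and d2u: "\<forall>x\<in>U. (Du has_derivative D2u x) (at x)"
   and pde: "\<forall>x\<in>ball c \<rho>. - (\<Sum>i\<in>Basis. D2u x i \<bullet> i) \<ge> \<Lambda> * u x"
   and Lam: "\<Lambda> \<ge> 8 * (real DIM('a))^2 / \<rho>^2"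
  shows False
proof -
  define N where "N = real DIM('a)"
  have N: "N \<ge> 1" unfolding N_def using DIM_positive[where 'a='a] by linarith
  define \<alpha> where "\<alpha> = N / \<rho>^2"
  have apos: "\<alpha> > 0" using N rho by (simp add: \<alpha>_def)
  have arho: "\<alpha> * \<rho>^2 = N" using rho by (simp add: \<alpha>_def)
  have Lam': "\<Lambda> \<ge> 8 * \<alpha> * N" using Lam by (simp add: \<alpha>_def N_def power2_eq_square)
  define c0 where "c0 = exp (- \<alpha> * \<rho>^2)"
  have c0: "c0 > 0" "c0 < 1" using arho N by (auto simp: c0_def)
  define v where "v x = gE \<alpha> c x - c0" for x
  define K where "K = cball c \<rho>"
  have KU: "K \<subseteq> U" using rho by (simp add: K_def)
  have ucK: "continuous_on K u" using continuous_on_subset[OF cont KU] .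
  define \<Phi> where "\<Phi> x = v x / u x" for x
  have \<Phi>c: "continuous_on K \<Phi>"
    unfolding \<Phi>_def[abs_def] v_def
    by (intro continuous_intros ucK gE_cont) (use pos in \<open>auto simp: K_def\<close>)
  obtain xs where xs: "xs \<in> K" "\<And>y. y \<in> K \<Longrightarrow> \<Phi> y \<le> \<Phi> xs"
    using continuous_attains_sup[OF _ _ \<Phi>c] rho by (auto simp: K_def)
  define M where "M = \<Phi> xs"
  have cK: "c \<in> K" using rho by (simp add: K_def)
  have "\<Phi> c > 0" using c0 pos rho by (simp add: \<Phi>_def v_def gE_def)
  hence Mpos: "M > 0" using xs(2)[OF cK] by (simp add: M_def)
  define t where "t = 1 / M"
  have tpos: "t > 0" using Mpos by (simp add: t_def)
  have uxs: "u xs > 0" using pos xs(1) by (simp add: K_def)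
  have vxs: "v xs = M * u xs" using uxs by (simp add: M_def \<Phi>_def)
  hence vxs_pos: "v xs > 0" using Mpos uxs by simp
  have below: "t * v y \<le> u y" if "y \<in> K" for y
  proof -
    have uy: "u y > 0" using pos that by (simp add: K_def)
    have "v y / u y \<le> M" using xs(2)[OF that] by (simp add: M_def \<Phi>_def)
    hence "v y \<le> M * u y" using uy by (simp add: divide_le_eq mult.commute)
    hence "v y / M \<le> u y" using Mpos by (simp add: divide_le_eq mult.commute)
    thus ?thesis by (simp add: t_def)
  qed
  have touch: "t * v xs = u xs" using vxs Mpos by (simp add: t_def)
  have xsin: "xs \<in> ball c \<rho>"
  proof -
    have "dist c xs \<noteq> \<rho>"
    proof
      assume "dist c xs = \<rho>"
      hence "v xs = 0" by (simp add: v_def gE_dist c0_def)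
      thus False using vxs_pos by simp
    qed
    thus ?thesis using xs(1) by (auto simp: K_def)
  qed
  define w where "w y = u y - t * v y" for y
  have dw: "(w has_derivative (\<lambda>h. (Du y - t *\<^sub>R gDE \<alpha> c y) \<bullet> h)) (at y)" if "y \<in> ball c \<rho>" for y
  proof -
    have yU: "y \<in> U" using that rho ball_subset_cball by blast
    have "(w has_derivative (\<lambda>h. Du y \<bullet> h - t * (gDE \<alpha> c y \<bullet> h - 0))) (at y)"
      unfolding w_def[abs_def] v_def
      by (intro has_derivative_diff has_derivative_mult_right gE_deriv has_derivative_const)
         (use du yU in auto)
    thus ?thesis by (rule has_derivative_eq_rhs) (auto simp: fun_eq_iff inner_diff_left)
  qed
  have xsU: "xs \<in> U" using xs(1) KU by auto
  have d2w: "((\<lambda>y. Du y - t *\<^sub>R gDE \<alpha> c y) has_derivative (\<lambda>h. D2u xs h - t *\<^sub>R gD2E \<alpha> c xs h)) (at xs)"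
    by (intro has_derivative_diff has_derivative_scaleR_right gDE_deriv) (use d2u xsU in auto)
  have wmin: "w xs \<le> w y" if "y \<in> ball c \<rho>" for y
  proof -
    have "y \<in> K" using that by (auto simp: K_def)
    thus ?thesis using below touch by (simp add: w_def)
  qed
  have "0 \<le> (\<Sum>i\<in>Basis. (D2u xs i - t *\<^sub>R gD2E \<alpha> c xs i) \<bullet> i)"
    by (rule second_deriv_test[OF open_ball xsin wmin dw d2w])
  also have "\<dots> = (\<Sum>i\<in>Basis. D2u xs i \<bullet> i) - t * (\<Sum>i\<in>Basis. gD2E \<alpha> c xs i \<bullet> i)"
    by (simp add: inner_diff_left sum_subtractf sum_distrib_left)
  finally have s1: "t * (\<Sum>i\<in>Basis. gD2E \<alpha> c xs i \<bullet> i) \<le> (\<Sum>i\<in>Basis. D2u xs i \<bullet> i)" by simp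
  define G where "G = gE \<alpha> c xs"
  have G: "G > 0" by (simp add: G_def gE_pos)
  define r2 where "r2 = (xs - c) \<bullet> (xs - c)"
  have r2: "r2 = (dist c xs)^2"
    by (simp add: r2_def dist_norm power2_norm_eq_inner[symmetric] norm_minus_commute)
  have tr: "(\<Sum>i\<in>Basis. gD2E \<alpha> c xs i \<bullet> i) = G * (4 * \<alpha>^2 * r2 - 2 * \<alpha> * N)"
    by (simp add: gD2E_trace G_def r2_def N_def)
  have s2: "\<Lambda> * u xs \<le> - (\<Sum>i\<in>Basis. D2u xs i \<bullet> i)" using pde xsin by auto
  have "\<Lambda> * (t * v xs) \<le> t * (G * (2 * \<alpha> * N - 4 * \<alpha>^2 * r2))"
    using s1 s2 tr touch by (simp add: algebra_simps)
  hence "t * (\<Lambda> * v xs) \<le> t * (G * (2 * \<alpha> * N - 4 * \<alpha>^2 * r2))" by (simp add: algebra_simps)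
  hence ineq: "\<Lambda> * v xs \<le> G * (2 * \<alpha> * N - 4 * \<alpha>^2 * r2)" using tpos by (simp add: mult_le_cancel_left_pos)
  have r2nn: "r2 \<ge> 0" using r2 by simp
  have "G * (2 * \<alpha> * N - 4 * \<alpha>^2 * r2) \<le> G * (2 * \<alpha> * N)" using G apos r2nn by (simp add: mult_left_mono)
  moreover have "8 * \<alpha> * N * v xs \<le> \<Lambda> * v xs" using Lam' vxs_pos by (simp add: mult_right_mono)
  ultimately have "8 * \<alpha> * N * v xs \<le> G * (2 * \<alpha> * N)" using ineq by linarith
  hence "(2 * \<alpha> * N) * (4 * v xs) \<le> (2 * \<alpha> * N) * G" by (simp add: algebra_simps)
  hence "4 * v xs \<le> G" using apos N by (simp add: mult_le_cancel_left_pos)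
  hence Gc: "3 * G \<le> 4 * c0" by (simp add: v_def G_def)
  have posrhs: "0 < G * (2 * \<alpha> * N - 4 * \<alpha>^2 * r2)"
    using ineq vxs_pos Lam' apos N by (smt (verit) mult_pos_pos)
  hence "4 * \<alpha>^2 * r2 < 2 * \<alpha> * N" using G by (simp add: zero_less_mult_iff)
  hence "\<alpha> * (2 * (\<alpha> * r2)) < \<alpha> * N" by (simp add: power2_eq_square algebra_simps)
  hence ar: "2 * (\<alpha> * r2) < N" using apos by simp
  define x where "x = \<alpha> * \<rho>^2 - \<alpha> * r2"
  have x: "x > 1/2" using ar arho N by (simp add: x_def)
  have "G = c0 * exp x" by (simp add: G_def gE_def c0_def x_def r2_def exp_add[symmetric])
  moreover have "exp x \<ge> 3/2" using exp_ge_add_one_self[of x] x by linarith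
  ultimately have e32: "G = c0 * exp x" "exp x \<ge> 3/2" by auto
  hence "G \<ge> c0 * (3/2)" using c0 mult_left_mono[OF e32(2), of c0] by simp
  thus False using Gc c0 by simp
qed


lemma lower_real:
  fixes s Mu ax bx Ba Bb lam \<epsilon> p q :: real
  assumes s: "0 \<le> s" "s \<le> Mu" and ab: "\<bar>bx\<bar> \<le> Bb" "\<bar>ax\<bar> \<le> Ba"
    and e: "0 < \<epsilon>" and lam: "0 \<le> lam" and q: "q < 2" and p: "2 < p"
  shows "- ((lam * (Bb + \<epsilon>) * \<epsilon> powr (q - 2) + Ba * Mu powr (p - 2)) * s)
     \<le> lam * (bx - \<epsilon>) * \<bar>s + \<epsilon>\<bar> powr (q - 2) * s + ax * \<bar>s\<bar> powr (p - 2) * s"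
proof -
  have Bb0: "0 \<le> Bb" "0 \<le> Ba" using ab by auto
  define P where "P = \<bar>s + \<epsilon>\<bar> powr (q - 2)"
  define Q where "Q = \<bar>s\<bar> powr (p - 2)"
  have P: "0 \<le> P" "P \<le> \<epsilon> powr (q - 2)"
    unfolding P_def using s e q by (auto intro!: powr_mono2')
  have Q: "0 \<le> Q" "Q \<le> Mu powr (p - 2)"
    unfolding Q_def using s p by (auto intro!: powr_mono2)
  have l1: "\<bar>lam * (bx - \<epsilon>)\<bar> \<le> lam * (Bb + \<epsilon>)"
    using ab lam e by (simp add: abs_mult mult_left_mono)
  have t1: "\<bar>lam * (bx - \<epsilon>) * P * s\<bar> \<le> lam * (Bb + \<epsilon>) * \<epsilon> powr (q - 2) * s"
  proof -
    have "\<bar>lam * (bx - \<epsilon>) * P * s\<bar> = \<bar>lam * (bx - \<epsilon>)\<bar> * P * s" using P s by (simp add: abs_mult)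
    also have "\<dots> \<le> lam * (Bb + \<epsilon>) * \<epsilon> powr (q - 2) * s"
      by (intro mult_right_mono mult_mono l1 P) (use s lam e Bb0 in auto)
    finally show ?thesis .
  qed
  have t2: "\<bar>ax * Q * s\<bar> \<le> Ba * Mu powr (p - 2) * s"
  proof -
    have "\<bar>ax * Q * s\<bar> = \<bar>ax\<bar> * Q * s" using Q s by (simp add: abs_mult)
    also have "\<dots> \<le> Ba * Mu powr (p - 2) * s"
      by (intro mult_right_mono mult_mono ab Q) (use s lam e Bb0 in auto)
    finally show ?thesis .
  qed
  show ?thesis using t1 t2 unfolding P_def[symmetric] Q_def[symmetric] by (simp add: algebra_simps)
qed

lemma upper_real:
  fixes s ax bx lam \<epsilon> p q \<delta> \<beta> \<Lambda> :: real
  assumes s: "0 < s" and d: "0 < \<delta>" "\<delta> \<le> ax" and b: "0 < \<beta>" "\<beta> \<le> bx - \<epsilon>"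
    and e: "0 < \<epsilon>" "\<epsilon> \<le> 1" and q: "q < 2" and p: "2 < p" and L: "\<Lambda> > 0"
    and lam: "lam \<ge> 2 * \<Lambda> / (\<beta> * ((\<Lambda> / \<delta>) powr (1 / (p - 2)) + 1) powr (q - 2))"
  shows "\<Lambda> * s \<le> lam * (bx - \<epsilon>) * \<bar>s + \<epsilon>\<bar> powr (q - 2) * s + ax * \<bar>s\<bar> powr (p - 2) * s"
proof -
  define s0 where "s0 = (\<Lambda> / \<delta>) powr (1 / (p - 2))"
  have s0: "s0 > 0" using L d by (simp add: s0_def)
  define P where "P = \<bar>s + \<epsilon>\<bar> powr (q - 2)"
  define Q where "Q = \<bar>s\<bar> powr (p - 2)"
  have Ppos: "P > 0" using s e by (simp add: P_def)
  have Qpos: "Q > 0" using s by (simp add: Q_def)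
  have lampos: "lam > 0"
  proof -
    have "0 < 2 * \<Lambda> / (\<beta> * (s0 + 1) powr (q - 2))" using L b s0 by simp
    thus ?thesis using lam by (simp add: s0_def)
  qed
  have T1: "0 \<le> lam * (bx - \<epsilon>) * P * s" using lampos b Ppos s by simp
  have T2: "0 \<le> ax * Q * s" using d Qpos s by simp
  show ?thesis
  proof (cases "s0 \<le> s")
    case True
    have "s0 powr (p - 2) = \<Lambda> / \<delta>" using L d p by (simp add: s0_def powr_powr)
    moreover have "s0 powr (p - 2) \<le> Q" unfolding Q_def using True s0 p by (auto intro!: powr_mono2)
    ultimately have "\<Lambda> \<le> \<delta> * Q" using d by (simp add: divide_le_eq mult.commute)
    also have "\<dots> \<le> ax * Q" using d Qpos by (simp add: mult_right_mono)
    finally have "\<Lambda> * s \<le> ax * Q * s" using s by (simp add: mult_right_mono)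
    thus ?thesis using T1 unfolding P_def[symmetric] Q_def[symmetric] by simp
  next
    case False
    have R: "(s0 + 1) powr (q - 2) \<le> P" unfolding P_def using False s e q by (auto intro!: powr_mono2')
    have Rpos: "(s0 + 1) powr (q - 2) > 0" using s0 by simp
    have "2 * \<Lambda> \<le> lam * (\<beta> * (s0 + 1) powr (q - 2))"
      using lam b Rpos by (simp add: s0_def divide_le_eq mult.commute)
    hence A: "2 * \<Lambda> \<le> lam * \<beta> * (s0 + 1) powr (q - 2)" by (simp add: algebra_simps)
    have B: "lam * \<beta> * (s0 + 1) powr (q - 2) \<le> lam * \<beta> * P"
      using mult_left_mono[OF R, of "lam * \<beta>"] lampos b by simp
    from A B have "2 * \<Lambda> \<le> lam * \<beta> * P" by linarith
    also have "\<dots> \<le> lam * (bx - \<epsilon>) * P" using lampos Ppos b by (simp add: mult_left_mono mult_right_mono)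
    finally have "\<Lambda> \<le> lam * (bx - \<epsilon>) * P" using L by simp
    hence "\<Lambda> * s \<le> lam * (bx - \<epsilon>) * P * s" using s by (simp add: mult_right_mono)
    thus ?thesis using T2 unfolding P_def[symmetric] Q_def[symmetric] by simp
  qed
qed

lemma holder_cont:
  assumes h: "holder_continuous_on \<alpha> S f" and a: "0 < \<alpha>"
  shows "continuous_on S f"
proof -
  obtain C where C: "\<forall>x\<in>S. \<forall>y\<in>S. \<bar>f x - f y\<bar> \<le> C * dist x y powr \<alpha>"
    using h by (auto simp: holder_continuous_on_def)
  define C' where "C' = max C 1"
  have C': "C' > 0" "C \<le> C'" by (auto simp: C'_def)
  show ?thesis unfolding continuous_on_iff
  proof (intro ballI allI impI)
    fix x e assume x: "x \<in> S" and e: "(0::real) < e"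
    define d where "d = (e / C') powr (1 / \<alpha>)"
    have d: "d > 0" using e C' by (simp add: d_def)
    have dpow: "d powr \<alpha> = e / C'" using e C' a by (simp add: d_def powr_powr)
    show "\<exists>d>0. \<forall>x'\<in>S. dist x' x < d \<longrightarrow> dist (f x') (f x) < e"
    proof (intro exI conjI ballI impI)
      show "d > 0" by (rule d)
      fix y assume y: "y \<in> S" "dist y x < d"
      have "dist y x powr \<alpha> < d powr \<alpha>" using y a by (intro powr_less_mono2) auto
      hence lt: "dist y x powr \<alpha> < e / C'" using dpow by simp
      have "\<bar>f y - f x\<bar> \<le> C * dist y x powr \<alpha>" using C y x by auto
      also have "\<dots> \<le> C' * dist y x powr \<alpha>" using C' by (simp add: mult_right_mono)
      also have "\<dots> < C' * (e / C')" using mult_strict_left_mono[OF lt C'(1)] .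
      also have "\<dots> = e" using C' by simp
      finally show "dist (f y) (f x) < e" by (simp add: dist_real_def)
    qed
  qed
qed

theorem proposition6p1:
  fixes \<Omega> :: "'a::euclidean_space set"
    and a b :: "'a \<Rightarrow> real"
    and p q \<alpha> :: real
  assumes dim: "DIM('a) \<ge> 2"
    and dom: "bounded_smooth_domain \<Omega>"
    and qp: "1 < q" "q < 2" "2 < p"
    and alpha: "0 < \<alpha>" "\<alpha> < 1"
    and holder: "holder_continuous_on \<alpha> (closure \<Omega>) a" "holder_continuous_on \<alpha> (closure \<Omega>) b"
    and ball: "\<exists>x0 r. 0 < r \<and> cball x0 r \<subseteq> \<Omega> \<and>
                 (\<forall>x\<in>cball x0 r. a x \<ge> 0 \<and> b x > 0) \<and> (\<exists>x\<in>cball x0 r. a x \<noteq> 0)"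
  shows "\<exists>lam0>0. \<exists>\<epsilon>0>0. \<forall>lam\<ge>lam0. \<forall>\<epsilon>. 0 < \<epsilon> \<and> \<epsilon> \<le> \<epsilon>0 \<longrightarrow>
           \<not> (\<exists>u. neumann_classical_solution \<Omega>
                   (\<lambda>x s. lam * (b x - \<epsilon>) * \<bar>s + \<epsilon>\<bar> powr (q - 2) * s + a x * \<bar>s\<bar> powr (p - 2) * s) u
                 \<and> (\<forall>x\<in>closure \<Omega>. u x \<ge> 0) \<and> (\<exists>x\<in>closure \<Omega>. u x \<noteq> 0))"
proof -
  have Om: "open \<Omega>" "connected \<Omega>" "bounded \<Omega>" using dom by (auto simp: bounded_smooth_domain_def)
  have cc: "compact (closure \<Omega>)" using Om(3) by simp
  have acont: "continuous_on (closure \<Omega>) a" by (rule holder_cont[OF holder(1) alpha(1)])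
  have bcont: "continuous_on (closure \<Omega>) b" by (rule holder_cont[OF holder(2) alpha(1)])
  obtain Ba where Ba: "\<And>x. x \<in> closure \<Omega> \<Longrightarrow> \<bar>a x\<bar> \<le> Ba"
    using continuous_on_compact_bound[OF cc acont] by (metis real_norm_def)
  obtain Bb where Bb: "\<And>x. x \<in> closure \<Omega> \<Longrightarrow> \<bar>b x\<bar> \<le> Bb"
    using continuous_on_compact_bound[OF cc bcont] by (metis real_norm_def)
  obtain x0 r xa where xa: "cball x0 r \<subseteq> \<Omega>" "xa \<in> cball x0 r" "a xa \<ge> 0" "b xa > 0" "a xa \<noteq> 0"
    using ball by blast
  have xaO: "xa \<in> \<Omega>" using xa by auto
  have xaC: "xa \<in> closure \<Omega>" using xaO closure_subset by auto
  have axa: "a xa > 0" using xa by simp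
  define \<delta> where "\<delta> = a xa / 2"
  define \<beta>0 where "\<beta>0 = b xa / 2"
  have \<delta>: "\<delta> > 0" using axa by (simp add: \<delta>_def)
  have \<beta>0: "\<beta>0 > 0" using xa by (simp add: \<beta>0_def)
  obtain da where da: "da > 0" "\<And>y. y \<in> closure \<Omega> \<Longrightarrow> dist y xa < da \<Longrightarrow> dist (a y) (a xa) < \<delta>"
    using acont xaC \<delta> unfolding continuous_on_iff by blast
  obtain db where db: "db > 0" "\<And>y. y \<in> closure \<Omega> \<Longrightarrow> dist y xa < db \<Longrightarrow> dist (b y) (b xa) < \<beta>0"
    using bcont xaC \<beta>0 unfolding continuous_on_iff by blast
  obtain eo where eo: "eo > 0" "cball xa eo \<subseteq> \<Omega>" using Om(1) xaO open_contains_cball by blast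
  define \<rho> where "\<rho> = min (min da db) eo / 2"
  have \<rho>: "\<rho> > 0" "\<rho> < da" "\<rho> < db" "\<rho> \<le> eo" using da db eo by (auto simp: \<rho>_def)
  have cbO: "cball xa \<rho> \<subseteq> \<Omega>" using eo \<rho> by (meson cball_subset_cball_iff order_trans order_refl)
  have aB: "a y \<ge> \<delta>" and bB: "b y \<ge> \<beta>0" if "y \<in> cball xa \<rho>" for y
  proof -
    have yC: "y \<in> closure \<Omega>" using that cbO closure_subset[of \<Omega>] by blast
    have dy: "dist y xa \<le> \<rho>" using that by (simp add: dist_commute)
    have "dist (a y) (a xa) < \<delta>" using da(2)[OF yC] dy \<rho> by simp
    thus "a y \<ge> \<delta>" using abs_ge_minus_self[of "a y - a xa"] unfolding \<delta>_def dist_real_def by linarith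
    have "dist (b y) (b xa) < \<beta>0" using db(2)[OF yC] dy \<rho> by simp
    thus "b y \<ge> \<beta>0" using abs_ge_minus_self[of "b y - b xa"] unfolding \<beta>0_def dist_real_def by linarith
  qed
  define \<Lambda> where "\<Lambda> = 8 * (real DIM('a))^2 / \<rho>^2"
  have \<Lambda>: "\<Lambda> > 0" using \<rho> by (simp add: \<Lambda>_def)
  define \<beta> where "\<beta> = \<beta>0 / 2"
  have \<beta>: "\<beta> > 0" using \<beta>0 by (simp add: \<beta>_def)
  define e0 where "e0 = min \<beta> 1"
  have e0: "e0 > 0" using \<beta> by (simp add: e0_def)
  define lam0 where "lam0 = 2 * \<Lambda> / (\<beta> * ((\<Lambda> / \<delta>) powr (1 / (p - 2)) + 1) powr (q - 2))"
  have lam0: "lam0 > 0"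
  proof -
    have "(\<Lambda> / \<delta>) powr (1 / (p - 2)) + 1 > 0" by (simp add: add_nonneg_pos)
    thus ?thesis using \<Lambda> \<beta> by (simp add: lam0_def)
  qed
  show ?thesis
  proof (rule exI[of _ lam0], rule conjI[OF lam0], rule exI[of _ e0], rule conjI[OF e0], intro allI impI notI)
    fix lam \<epsilon> assume lam: "lam0 \<le> lam" and eps: "0 < \<epsilon> \<and> \<epsilon> \<le> e0"
    assume "\<exists>u. neumann_classical_solution \<Omega>
                   (\<lambda>x s. lam * (b x - \<epsilon>) * \<bar>s + \<epsilon>\<bar> powr (q - 2) * s + a x * \<bar>s\<bar> powr (p - 2) * s) u
                 \<and> (\<forall>x\<in>closure \<Omega>. u x \<ge> 0) \<and> (\<exists>x\<in>closure \<Omega>. u x \<noteq> 0)"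
    then obtain u Du D2u where
      ucont: "continuous_on (closure \<Omega>) u" and
      du: "\<forall>x\<in>\<Omega>. (u has_derivative (\<lambda>h. Du x \<bullet> h)) (at x)" and
      d2u: "\<forall>x\<in>\<Omega>. (Du has_derivative D2u x) (at x)" and
      eq: "\<forall>x\<in>\<Omega>. - (\<Sum>i\<in>Basis. D2u x i \<bullet> i) =
             lam * (b x - \<epsilon>) * \<bar>u x + \<epsilon>\<bar> powr (q - 2) * u x + a x * \<bar>u x\<bar> powr (p - 2) * u x" and
      unn: "\<forall>x\<in>closure \<Omega>. u x \<ge> 0" and
      unz: "\<exists>x\<in>closure \<Omega>. u x \<noteq> 0"
      unfolding neumann_classical_solution_def by blast
    have lampos: "lam > 0" using lam lam0 by simp
    have uO: "continuous_on \<Omega> u" using continuous_on_subset[OF ucont closure_subset] .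
    obtain Mu where Mu: "\<And>x. x \<in> closure \<Omega> \<Longrightarrow> \<bar>u x\<bar> \<le> Mu"
      using continuous_on_compact_bound[OF cc ucont] by (metis real_norm_def)
    have nnO: "\<forall>x\<in>\<Omega>. 0 \<le> u x" using unn closure_subset by auto
    have exO: "\<exists>x\<in>\<Omega>. u x > 0"
    proof (rule ccontr)
      assume "\<not> (\<exists>x\<in>\<Omega>. u x > 0)"
      hence "\<And>x. x \<in> \<Omega> \<Longrightarrow> u x = 0" using nnO by force
      hence "\<And>x. x \<in> closure \<Omega> \<Longrightarrow> u x = 0" using continuous_constant_on_closure[OF ucont] by blast
      thus False using unz by blast
    qed
    define C where "C = lam * (Bb + \<epsilon>) * \<epsilon> powr (q - 2) + Ba * Mu powr (p - 2)"
    have C: "0 \<le> C"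
    proof -
      have "0 \<le> Bb" "0 \<le> Ba" using Ba Bb xaC by (meson abs_ge_zero order_trans)+
      thus ?thesis using lampos eps by (simp add: C_def)
    qed
    have pde1: "\<forall>x\<in>\<Omega>. - (\<Sum>i\<in>Basis. D2u x i \<bullet> i) \<ge> - C * u x"
    proof
      fix x assume x: "x \<in> \<Omega>"
      have xC: "x \<in> closure \<Omega>" using x closure_subset by auto
      have "- (C * u x) \<le> lam * (b x - \<epsilon>) * \<bar>u x + \<epsilon>\<bar> powr (q - 2) * u x + a x * \<bar>u x\<bar> powr (p - 2) * u x"
        unfolding C_def
        by (rule lower_real) (use nnO x Mu[OF xC] Bb[OF xC] Ba[OF xC] eps lampos qp in auto)
      thus "- (\<Sum>i\<in>Basis. D2u x i \<bullet> i) \<ge> - C * u x" using eq x by simp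
    qed
    have posO: "\<forall>x\<in>\<Omega>. u x > 0"
      by (rule strong_pos[OF Om(1,2) uO nnO C du d2u pde1 exO])
    have P1: "\<forall>x\<in>cball xa \<rho>. 0 < u x" using posO cbO by auto
    have P3: "\<Lambda> \<ge> 8 * (real DIM('a))^2 / \<rho>^2" by (simp add: \<Lambda>_def)
    have P2: "\<forall>x\<in>ball xa \<rho>. - (\<Sum>i\<in>Basis. D2u x i \<bullet> i) \<ge> \<Lambda> * u x"
      proof
        fix x assume x: "x \<in> ball xa \<rho>"
        hence xc: "x \<in> cball xa \<rho>" by auto
        hence xO: "x \<in> \<Omega>" using cbO by auto
        have "\<Lambda> * u x \<le> lam * (b x - \<epsilon>) * \<bar>u x + \<epsilon>\<bar> powr (q - 2) * u x + a x * \<bar>u x\<bar> powr (p - 2) * u x"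
        proof (rule upper_real[where \<delta>=\<delta> and \<beta>=\<beta>])
          show "0 < u x" using posO xO by auto
          show "\<beta> \<le> b x - \<epsilon>" using bB[OF xc] eps by (simp add: \<beta>_def e0_def)
          show "\<epsilon> \<le> 1" using eps by (simp add: e0_def)
          show "2 * \<Lambda> / (\<beta> * ((\<Lambda> / \<delta>) powr (1 / (p - 2)) + 1) powr (q - 2)) \<le> lam"
            using lam by (simp add: lam0_def)
        qed (use \<delta> aB[OF xc] \<beta> eps qp \<Lambda> in auto)
        thus "- (\<Sum>i\<in>Basis. D2u x i \<bullet> i) \<ge> \<Lambda> * u x" using eq xO by simp
      qed
    show False by (rule touching[OF Om(1) \<rho>(1) cbO uO P1 du d2u P2 P3])
  qed
qed


end
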